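(* Let $\mathbb{K}$ be an algebraically closed field of characteristic zero, let $D$ be a derivation of $\mathbb{K}[x,y]$ and let $\rho\in\mathrm{Aut}(D)$. Suppose $\rho(\mathfrak{m})=\mathfrak{m}$ for a maximal ideal $\mathfrak{m}$ of $\mathbb{K}[x,y]$ which is not stable under $D$ (i.e. $D(\mathfrak{m})\not\subseteq\mathfrak{m}$). Then there exists a principal ideal $\mathfrak{a}\subseteq\mathfrak{m}$ (possibly $\mathfrak{a}=(0)$) such that: (a) $D(\mathfrak{a})\subseteq\mathfrak{a}$ and $\rho(\mathfrak{a})=\mathfrak{a}$; (b) $\rho$ induces the identity map on $\mathbb{K}[x,y]/\mathfrak{a}$, i.e. $\rho(g)-g\in\mathfrak{a}$ for all $g\in\mathbb{K}[x,y]$.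
   Context: A derivation of $\mathbb{K}[x,y]$ is a $\mathbb{K}$-linear map $D$ with $D(fg)=gD(f)+fD(g)$. $\mathrm{Aut}(D)$ denotes the group of $\mathbb{K}$-algebra automorphisms $\rho$ of $\mathbb{K}[x,y]$ with $\rho D=D\rho$. *)

theory Defs
  imports "HOL-Computational_Algebra.Polynomial"
begin

text \<open>The bivariate polynomial ring K[x,y] is represented as K[x][y], i.e. the type
  'a poly poly. Scalars c of K embed as the constant polynomial [:[:c:]:].\<close>

definition const2 :: "'a::comm_ring_1 \<Rightarrow> 'a poly poly" where
  "const2 c = [:[:c:]:]"

definition is_derivation :: "('a::comm_ring_1 poly poly \<Rightarrow> 'a poly poly) \<Rightarrow> bool" where
  "is_derivation D \<longleftrightarrow>
     (\<forall>f g. D (f + g) = D f + D g) \<and>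
     (\<forall>c f. D (const2 c * f) = const2 c * D f) \<and>
     (\<forall>f g. D (f * g) = g * D f + f * D g)"

definition is_K_alg_aut :: "('a::comm_ring_1 poly poly \<Rightarrow> 'a poly poly) \<Rightarrow> bool" where
  "is_K_alg_aut \<rho> \<longleftrightarrow>
     bij \<rho> \<and>
     (\<forall>f g. \<rho> (f + g) = \<rho> f + \<rho> g) \<and>
     (\<forall>f g. \<rho> (f * g) = \<rho> f * \<rho> g) \<and>
     (\<forall>c. \<rho> (const2 c) = const2 c)"

definition Aut_der :: "('a::comm_ring_1 poly poly \<Rightarrow> 'a poly poly) \<Rightarrow> ('a poly poly \<Rightarrow> 'a poly poly) set" where
  "Aut_der D = {\<rho>. is_K_alg_aut \<rho> \<and> \<rho> \<circ> D = D \<circ> \<rho>}"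

definition is_ideal :: "'a::comm_ring_1 set \<Rightarrow> bool" where
  "is_ideal I \<longleftrightarrow> 0 \<in> I \<and> (\<forall>a\<in>I. \<forall>b\<in>I. a + b \<in> I) \<and> (\<forall>a\<in>I. \<forall>r. r * a \<in> I)"

definition is_maximal_ideal :: "'a::comm_ring_1 set \<Rightarrow> bool" where
  "is_maximal_ideal M \<longleftrightarrow> is_ideal M \<and> M \<noteq> UNIV \<and>
     (\<forall>J. is_ideal J \<and> M \<subseteq> J \<longrightarrow> J = M \<or> J = UNIV)"

definition principal_ideal :: "'a::comm_ring_1 \<Rightarrow> 'a set" where
  "principal_ideal p = {p * r | r. True}"

end

theory Submission imports Defs "HOL-Computational_Algebra.Formal_Power_Series" begin

lemma hom_sum:
  assumes "\<And>a b. f (a + b) = f a + f b" "f 0 = 0"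
  shows "f (sum g A) = (\<Sum>x\<in>A. f (g x))"
  by (induction A rule: infinite_finite_induct) (auto simp: assms)

lemma map_poly_hom_mult:
  fixes f :: "'a::comm_ring_1 \<Rightarrow> 'b::comm_ring_1"
  assumes "\<And>a b. f (a + b) = f a + f b" "\<And>a b. f (a * b) = f a * f b" "f 0 = 0"
  shows "map_poly f (p * q) = map_poly f p * map_poly f q"
proof (intro poly_eqI)
  fix n
  show "coeff (map_poly f (p * q)) n = coeff (map_poly f p * map_poly f q) n"
    by (simp add: coeff_map_poly assms coeff_mult hom_sum[of f, OF assms(1,3)])
qed

lemma map_poly_hom_add:
  assumes "\<And>a b. f (a + b) = f a + f b" "f 0 = 0"
  shows "map_poly f (p + q) = map_poly f p + map_poly f q"
  by (intro poly_eqI) (simp add: coeff_map_poly assms)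

lemma map_poly_hom_diff:
  fixes f :: "'a::comm_ring_1 \<Rightarrow> 'b::comm_ring_1"
  assumes "\<And>a b. f (a - b) = f a - f b" "f 0 = 0"
  shows "map_poly f (p - q) = map_poly f p - map_poly f q"
  by (intro poly_eqI) (simp add: coeff_map_poly assms)

lemma ideal_mult: "is_ideal I \<Longrightarrow> a \<in> I \<Longrightarrow> r * a \<in> I"
  unfolding is_ideal_def by blast
lemma ideal_mult2: "is_ideal I \<Longrightarrow> a \<in> I \<Longrightarrow> a * r \<in> I"
  unfolding is_ideal_def by (metis mult.commute)
lemma ideal_add: "is_ideal I \<Longrightarrow> a \<in> I \<Longrightarrow> b \<in> I \<Longrightarrow> a + b \<in> I"
  unfolding is_ideal_def by blast
lemma ideal_0: "is_ideal I \<Longrightarrow> 0 \<in> I"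
  unfolding is_ideal_def by blast
lemma ideal_uminus: "is_ideal (I::'a::comm_ring_1 set) \<Longrightarrow> a \<in> I \<Longrightarrow> - a \<in> I"
  using ideal_mult[of I a "-1"] by simp
lemma ideal_diff: "is_ideal (I::'a::comm_ring_1 set) \<Longrightarrow> a \<in> I \<Longrightarrow> b \<in> I \<Longrightarrow> a - b \<in> I"
  using ideal_add[of I a "-b"] ideal_uminus[of I b] by simp
lemma ideal_1: "is_ideal (I::'a::comm_ring_1 set) \<Longrightarrow> 1 \<in> I \<Longrightarrow> I = UNIV"
  using ideal_mult[of I 1] by auto

lemma maximal_ideal: "is_maximal_ideal m \<Longrightarrow> is_ideal m"
  unfolding is_maximal_ideal_def by blast

lemma maximal_1: "is_maximal_ideal (m::'a::comm_ring_1 set) \<Longrightarrow> 1 \<notin> m"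
  unfolding is_maximal_ideal_def using ideal_1 by blast

lemma maximal_inv:
  fixes m :: "'a::comm_ring_1 set"
  assumes "is_maximal_ideal m" "a \<notin> m"
  shows "\<exists>u. 1 - u * a \<in> m"
proof -
  define J where "J = {x + r * a |x r. x \<in> m}"
  have im: "is_ideal m" using assms(1) maximal_ideal by blast
  have "is_ideal J"
    unfolding is_ideal_def J_def
  proof (intro conjI ballI allI)
    show "0 \<in> {x + r * a |x r. x \<in> m}" using ideal_0[OF im] by (auto intro!: exI[of _ 0])
  next
    fix u v assume "u \<in> {x + r * a |x r. x \<in> m}" "v \<in> {x + r * a |x r. x \<in> m}"
    then obtain x r x' r' where "u = x + r * a" "v = x' + r' * a" "x \<in> m" "x' \<in> m" by blast
    then have "u + v = (x + x') + (r + r') * a" "x + x' \<in> m" by (auto simp: algebra_simps ideal_add[OF im])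
    then show "u + v \<in> {x + r * a |x r. x \<in> m}" by blast
  next
    fix u s assume "u \<in> {x + r * a |x r. x \<in> m}"
    then obtain x r where "u = x + r * a" "x \<in> m" by blast
    then have "s * u = (s * x) + (s * r) * a" "s * x \<in> m" by (auto simp: algebra_simps ideal_mult[OF im])
    then show "s * u \<in> {x + r * a |x r. x \<in> m}" by blast
  qed
  moreover have "m \<subseteq> J" unfolding J_def
  proof
    fix x assume "x \<in> m" then have "x = x + 0 * a \<and> x \<in> m" by simp
    then show "x \<in> {x + r * a |x r. x \<in> m}" by blast
  qed
  moreover have "a \<in> J" unfolding J_def
  proof -
    have "a = 0 + 1 * a \<and> (0::'a) \<in> m" using ideal_0[OF im] by simp
    then show "a \<in> {x + r * a |x r. x \<in> m}" by blast
  qed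
  ultimately have "J = UNIV" using assms unfolding is_maximal_ideal_def by blast
  then have "1 \<in> J" by blast
  then obtain x r where "1 = x + r * a" "x \<in> m" unfolding J_def by blast
  then have "1 - r * a = x" by (simp add: algebra_simps)
  then show ?thesis using \<open>x \<in> m\<close> by blast
qed

lemma maximal_prime:
  fixes m :: "'a::comm_ring_1 set"
  assumes "is_maximal_ideal m" "a * b \<in> m"
  shows "a \<in> m \<or> b \<in> m"
proof (rule ccontr)
  assume "\<not> (a \<in> m \<or> b \<in> m)"
  then obtain u where u: "1 - u * a \<in> m" and b: "b \<notin> m" using maximal_inv[OF assms(1)] by blast
  have im: "is_ideal m" using assms(1) maximal_ideal by blast
  have "b * (1 - u * a) + u * (a * b) \<in> m"
    by (rule ideal_add[OF im]) (auto intro: ideal_mult[OF im] u assms(2))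
  also have "b * (1 - u * a) + u * (a * b) = b" by (simp add: algebra_simps)
  finally show False using b by blast
qed

lemma principal_ideal_is_ideal: "is_ideal (principal_ideal (p::'a::comm_ring_1))"
  unfolding is_ideal_def principal_ideal_def
proof (intro conjI ballI allI)
  show "0 \<in> {p * r |r. True}" by (auto intro!: exI[of _ 0])
next
  fix a b assume "a \<in> {p * r |r. True}" "b \<in> {p * r |r. True}"
  then obtain r s where "a = p * r" "b = p * s" by blast
  then show "a + b \<in> {p * r |r. True}" by (intro CollectI exI[of _ "r + s"]) (simp add: distrib_left)
next
  fix a t assume "a \<in> {p * r |r. True}"
  then obtain r where "a = p * r" by blast
  then show "t * a \<in> {p * r |r. True}" by (intro CollectI exI[of _ "t * r"]) (simp add: mult.left_commute)
qed

lemma principal_0: "principal_ideal 0 = {0}"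
  unfolding principal_ideal_def by auto

lemma in_principal: "x \<in> principal_ideal p \<longleftrightarrow> p dvd x"
  unfolding principal_ideal_def by (auto simp: dvd_def)

definition ev :: "'a::comm_ring_1 \<Rightarrow> 'a \<Rightarrow> 'a poly poly \<Rightarrow> 'a" where
  "ev \<alpha> \<beta> f = poly (poly f [:\<beta>:]) \<alpha>"

definition Xp :: "'a::comm_ring_1 poly poly" where "Xp = [:[:0,1:]:]"
definition Yp :: "'a::comm_ring_1 poly poly" where "Yp = [:0,1:]"

lemma ev_add [simp]: "ev a b (f + g) = ev a b f + ev a b g"
  by (simp add: ev_def)
lemma ev_diff [simp]: "ev a b (f - g) = ev a b f - ev a b g"
  by (simp add: ev_def)
lemma ev_uminus [simp]: "ev a b (- f) = - ev a b f"
  by (simp add: ev_def)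
lemma ev_mult [simp]: "ev a b (f * g) = ev a b f * ev a b g"
  by (simp add: ev_def)
lemma ev_0 [simp]: "ev a b 0 = 0"
  by (simp add: ev_def)
lemma ev_1 [simp]: "ev a b 1 = 1"
  by (simp add: ev_def)
lemma ev_const2 [simp]: "ev a b (const2 c) = c"
  by (simp add: ev_def const2_def)
lemma ev_const [simp]: "ev a b [:[:c:]:] = c"
  by (simp add: ev_def)
lemma ev_Xlin [simp]: "ev a b [:[:-g,1:]:] = a - g"
  by (simp add: ev_def)
lemma ev_Ylin [simp]: "ev a b [:[:-g:],1:] = b - g"
  by (simp add: ev_def)
lemma ev_of_nat [simp]: "ev a b (of_nat n) = of_nat n"
  by (induction n) (simp_all)

lemma const2_add: "const2 (a + b) = const2 a + const2 b" by (simp add: const2_def)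
lemma const2_mult: "const2 (a * b) = const2 a * const2 b" by (simp add: const2_def)
lemma const2_1 [simp]: "const2 1 = 1" by (simp add: const2_def one_pCons)
lemma const2_0 [simp]: "const2 0 = 0" by (simp add: const2_def)

lemma Xlin_eq: "[:[:-g,1:]:] = Xp - const2 g"
  by (simp add: Xp_def const2_def)
lemma Ylin_eq: "[:[:-g:],1:] = Yp - const2 (g::'a::comm_ring_1)"
  by (simp add: Yp_def const2_def)

lemma decomp:
  fixes f :: "'a::comm_ring_1 poly poly"
  shows "f = [:[:-\<beta>:],1:] * synthetic_div f [:\<beta>:] + [:[:-\<alpha>,1:]:] * [:synthetic_div (poly f [:\<beta>:]) \<alpha>:]
           + const2 (ev \<alpha> \<beta> f)"
proof -
  define g where "g = poly f [:\<beta>:]"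
  have 1: "[:- [:\<beta>:], 1:] * synthetic_div f [:\<beta>:] + [:g:] = f"
    unfolding g_def by (rule synthetic_div_correct')
  have 2: "[:-\<alpha>, 1:] * synthetic_div g \<alpha> + [:poly g \<alpha>:] = g"
    by (rule synthetic_div_correct')
  have "[:g:] = [:[:-\<alpha>, 1:] * synthetic_div g \<alpha>:] + [:[:poly g \<alpha>:]:]"
    by (subst 2[symmetric]) simp
  also have "\<dots> = [:[:-\<alpha>,1:]:] * [:synthetic_div g \<alpha>:] + const2 (ev \<alpha> \<beta> f)"
    by (simp add: const2_def ev_def g_def)
  finally have 3: "[:g:] = [:[:-\<alpha>,1:]:] * [:synthetic_div g \<alpha>:] + const2 (ev \<alpha> \<beta> f)" .
  have "- [:\<beta>:] = [:-\<beta>:]" by simp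
  have "f = [:- [:\<beta>:], 1:] * synthetic_div f [:\<beta>:] + [:g:]" using 1 by simp
  also note 3
  finally show ?thesis unfolding g_def by (simp only: add.assoc \<open>- [:\<beta>:] = [:-\<beta>:]\<close>)
qed

lemma der_add: "is_derivation D \<Longrightarrow> D (f + g) = D f + D g"
  unfolding is_derivation_def by blast
lemma der_mult: "is_derivation D \<Longrightarrow> D (f * g) = g * D f + f * D g"
  unfolding is_derivation_def by blast
lemma der_const_mult: "is_derivation D \<Longrightarrow> D (const2 c * f) = const2 c * D f"
  unfolding is_derivation_def by blast
lemma der_0: "is_derivation D \<Longrightarrow> D 0 = 0"
  using der_add[of D 0 0] by simp
lemma der_diff: "is_derivation D \<Longrightarrow> D (f - g) = D f - D g"
  using der_add[of D "f - g" g] by (simp add: algebra_simps)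
lemma der_1: "is_derivation D \<Longrightarrow> D 1 = 0"
  using der_mult[of D 1 1] by simp
lemma der_const2: "is_derivation D \<Longrightarrow> D (const2 c) = 0"
  using der_const_mult[of D c 1] der_1[of D] by simp

lemma der_ev_m:
  fixes D :: "'a::comm_ring_1 poly poly \<Rightarrow> 'a poly poly"
  assumes D: "is_derivation D" and A: "ev \<alpha> \<beta> (D Xp) = 0" and B: "ev \<alpha> \<beta> (D Yp) = 0"
    and f: "ev \<alpha> \<beta> f = 0"
  shows "ev \<alpha> \<beta> (D f) = 0"
proof -
  define f2 where "f2 = synthetic_div f [:\<beta>:]"
  define q where "q = [:synthetic_div (poly f [:\<beta>:]) \<alpha>:]"
  have e: "f = [:[:-\<beta>:],1:] * f2 + [:[:-\<alpha>,1:]:] * q" using decomp[of f \<beta> \<alpha>] f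
    unfolding f2_def q_def by simp
  have "D f = f2 * D [:[:-\<beta>:],1:] + [:[:-\<beta>:],1:] * D f2 + (q * D [:[:-\<alpha>,1:]:] + [:[:-\<alpha>,1:]:] * D q)"
    by (subst e) (simp only: der_add[OF D] der_mult[OF D])
  moreover have "D [:[:-\<beta>:],1:] = D Yp" unfolding Ylin_eq by (simp add: der_diff[OF D] der_const2[OF D])
  moreover have "D [:[:-\<alpha>,1:]:] = D Xp" unfolding Xlin_eq by (simp add: der_diff[OF D] der_const2[OF D])
  ultimately have "ev \<alpha> \<beta> (D f) = ev \<alpha> \<beta> f2 * ev \<alpha> \<beta> (D Yp) + ev \<alpha> \<beta> [:[:-\<beta>:],1:] * ev \<alpha> \<beta> (D f2)
      + (ev \<alpha> \<beta> q * ev \<alpha> \<beta> (D Xp) + ev \<alpha> \<beta> [:[:-\<alpha>,1:]:] * ev \<alpha> \<beta> (D q))"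
    by (simp only: ev_add ev_mult)
  then show ?thesis by (simp only: A B ev_Xlin ev_Ylin) simp
qed

section \<open>The swap automorphism\<close>

definition E :: "'a::comm_ring_1 poly \<Rightarrow> 'a poly poly" where
  "E = map_poly (\<lambda>c. [:c:])"

lemma E_add [simp]: "E (a + b) = E a + E b"
  unfolding E_def by (rule map_poly_hom_add) simp_all
lemma E_mult [simp]: "E (a * b) = E a * E b"
  unfolding E_def by (rule map_poly_hom_mult) simp_all
lemma E_0 [simp]: "E 0 = 0" unfolding E_def by simp
lemma E_1 [simp]: "E 1 = 1" unfolding E_def by simp

definition sw :: "'a::comm_ring_1 poly poly \<Rightarrow> 'a poly poly" where
  "sw f = poly (map_poly E f) Xp"

lemma sw_add [simp]: "sw (a + b) = sw a + sw b"
  unfolding sw_def by (subst map_poly_hom_add) simp_all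
lemma sw_mult [simp]: "sw (a * b) = sw a * sw b"
  unfolding sw_def by (subst map_poly_hom_mult) simp_all
lemma sw_0 [simp]: "sw 0 = 0" unfolding sw_def by simp
lemma sw_1 [simp]: "sw 1 = 1" unfolding sw_def by simp
lemma sw_uminus [simp]: "sw (- a) = - sw a"
  using sw_add[of a "-a"] by (simp add: minus_unique)
lemma sw_diff [simp]: "sw (a - b) = sw a - sw b"
  using sw_add[of "a - b" b] by (simp add: algebra_simps)

lemma sw_const_poly: "sw [:a:] = E a"
  unfolding sw_def by (simp add: map_poly_pCons)
lemma sw_const2 [simp]: "sw (const2 c) = const2 c"
  unfolding const2_def sw_const_poly by (simp add: E_def map_poly_pCons)
lemma sw_Xp [simp]: "sw Xp = Yp"
  unfolding Xp_def sw_const_poly by (simp add: E_def Yp_def map_poly_pCons one_pCons)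
lemma sw_Yp [simp]: "sw Yp = Xp"
  unfolding Yp_def sw_def by (simp add: map_poly_pCons one_pCons[symmetric])
lemma sw_Xlin: "sw [:[:-g,1:]:] = [:[:-g:],1:]"
  unfolding Xlin_eq Ylin_eq by simp

lemma hom_id_unique:
  fixes T :: "'a::comm_ring_1 poly poly \<Rightarrow> 'a poly poly"
  assumes add: "\<And>a b. T (a + b) = T a + T b" and mult: "\<And>a b. T (a * b) = T a * T b"
    and c: "\<And>c. T (const2 c) = const2 c" and x: "T Xp = Xp" and y: "T Yp = Yp"
  shows "T f = f"
proof -
  have 1: "T [:a:] = [:a:]" for a
  proof (induction a)
    case 0
    then show ?case using c[of 0] by (simp add: const2_def)
  next
    case (pCons c' a)
    have e: "[:pCons c' a:] = const2 c' + Xp * [:a:]"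
      by (simp add: const2_def Xp_def)
    show ?case unfolding e by (simp only: add mult c x pCons.IH)
  qed
  show ?thesis
  proof (induction f)
    case 0
    then show ?case using 1[of 0] by simp
  next
    case (pCons a p)
    have e: "pCons a p = [:a:] + Yp * p"
      by (simp add: Yp_def)
    show ?case unfolding e by (simp only: add mult 1 y pCons.IH)
  qed
qed

lemma sw_sw [simp]: "sw (sw f) = f"
  by (rule hom_id_unique[of "\<lambda>f. sw (sw f)"]) simp_all

lemma sw_image_iff: "x \<in> sw ` A \<longleftrightarrow> sw x \<in> A"
  by (metis image_iff sw_sw)

section \<open>Evaluation in x\<close>

definition psi :: "'a::comm_ring_1 \<Rightarrow> 'a poly poly \<Rightarrow> 'a poly" where
  "psi g f = map_poly (\<lambda>c. poly c g) f"

lemma psi_add [simp]: "psi g (a + b) = psi g a + psi g b"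
  unfolding psi_def by (rule map_poly_hom_add) simp_all
lemma psi_mult [simp]: "psi g (a * b) = psi g a * psi g b"
  unfolding psi_def by (rule map_poly_hom_mult) simp_all
lemma psi_diff [simp]: "psi g (a - b) = psi g a - psi g b"
  unfolding psi_def by (rule map_poly_hom_diff) simp_all
lemma psi_const [simp]: "psi g [:a:] = [:poly a g:]"
  unfolding psi_def by (simp add: map_poly_pCons)
lemma psi_1 [simp]: "psi g 1 = 1"
  unfolding psi_def by simp

lemma psi_zero_dvd:
  fixes w :: "'a::comm_ring_1 poly poly"
  assumes "psi g w = 0"
  shows "w = [:[:-g,1:]:] * map_poly (\<lambda>c. synthetic_div c g) w"
proof (rule poly_eqI)
  fix i
  have z: "poly (coeff w i) g = 0"
    using assms unfolding psi_def by (metis coeff_0 coeff_map_poly poly_0)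
  have "coeff ([:[:-g,1:]:] * map_poly (\<lambda>c. synthetic_div c g) w) i
        = [:-g,1:] * synthetic_div (coeff w i) g"
    by (simp add: coeff_map_poly)
  also have "\<dots> = coeff w i"
    using synthetic_div_correct'[of g "coeff w i"] z by simp
  finally show "coeff w i = coeff ([:[:-g,1:]:] * map_poly (\<lambda>c. synthetic_div c g) w) i" by simp
qed

lemma Xlin_nonzero [simp]: "[:[:-g,1:]:] \<noteq> (0::'a::comm_ring_1 poly poly)"
  by simp

lemma GL:
  fixes g :: "'a::alg_closed_field poly poly"
  assumes np: "\<And>\<gamma>. psi \<gamma> g \<noteq> 0"
  shows "d \<noteq> 0 \<Longrightarrow> g dvd [:d:] * h \<Longrightarrow> g dvd h"
proof (induction "degree d" arbitrary: d h rule: less_induct)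
  case less
  show ?case
  proof (cases "degree d = 0")
    case True
    then obtain c where d: "d = [:c:]" by (metis degree_eq_zeroE)
    with less.prems have c: "c \<noteq> 0" by simp
    have "h = [:[:inverse c:]:] * ([:d:] * h)"
      using c by (simp add: d mult.assoc[symmetric] one_pCons[symmetric])
    then show ?thesis using less.prems(2) by (metis dvd_mult)
  next
    case False
    then obtain \<gamma> where "poly d \<gamma> = 0" using alg_closed_imp_poly_has_root by blast
    then obtain d' where d: "d = [:-\<gamma>,1:] * d'" using poly_eq_0_iff_dvd by (metis dvdE)
    with less.prems have d'0: "d' \<noteq> 0" by auto
    have "degree ([:-\<gamma>,1:] * d') = degree [:-\<gamma>,1:] + degree d'"
      by (rule degree_mult_eq) (use d'0 in auto)
    then have degd: "degree d = Suc (degree d')" unfolding d by simp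
    from less.prems(2) obtain w where w: "[:d:] * h = g * w" by (elim dvdE)
    have "[:d:] = [:[:-\<gamma>,1:]:] * [:d':]" by (simp add: d)
    then have w2: "[:[:-\<gamma>,1:]:] * ([:d':] * h) = g * w" using w by (simp add: mult.assoc)
    have "psi \<gamma> ([:[:-\<gamma>,1:]:] * ([:d':] * h)) = 0"
      by (simp only: psi_mult psi_const) simp
    then have "psi \<gamma> g * psi \<gamma> w = 0"
      by (simp only: w2 psi_mult)
    then have "psi \<gamma> w = 0" using np[of \<gamma>] by simp
    then obtain w' where w': "w = [:[:-\<gamma>,1:]:] * w'" using psi_zero_dvd by blast
    have "[:[:-\<gamma>,1:]:] * ([:d':] * h) = [:[:-\<gamma>,1:]:] * (g * w')"
      using w2 w' by (simp add: ac_simps)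
    then have "[:d':] * h = g * w'" by (subst (asm) mult_left_cancel) simp_all
    then have "g dvd [:d':] * h" by simp
    then show ?thesis using less.hyps[of d' h] degd d'0 by simp
  qed
qed

lemma KL:
  fixes I :: "'a::alg_closed_field poly poly set"
  assumes id: "is_ideal I" and pr: "\<And>a b. a * b \<in> I \<Longrightarrow> a \<in> I \<or> b \<in> I"
    and nc: "\<And>d. [:d:] \<in> I \<Longrightarrow> d = 0"
  shows "\<exists>g. I = principal_ideal g"
proof (cases "I \<subseteq> {0}")
  case True
  then have "I = {0}" using ideal_0[OF id] by blast
  then have "I = principal_ideal 0" by (simp add: principal_0)
  then show ?thesis by blast
next
  case False
  then obtain g1 where g1: "g1 \<in> I" "g1 \<noteq> 0" by blast
  define P where "P n \<longleftrightarrow> (\<exists>g\<in>I. g \<noteq> 0 \<and> degree g = n)" for n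
  define n where "n = (LEAST n. P n)"
  have "P (degree g1)" using g1 unfolding P_def by blast
  then have Pn: "P n" unfolding n_def by (rule LeastI)
  have nmin: "n \<le> degree g" if "g \<in> I" "g \<noteq> 0" for g
    unfolding n_def by (rule Least_le) (unfold P_def, use that in blast)
  define Q where "Q k \<longleftrightarrow> (\<exists>g\<in>I. g \<noteq> 0 \<and> degree g = n \<and> degree (lead_coeff g) = k)" for k
  define k where "k = (LEAST k. Q k)"
  obtain g2 where "g2 \<in> I" "g2 \<noteq> 0" "degree g2 = n" using Pn unfolding P_def by blast
  then have "Q (degree (lead_coeff g2))" unfolding Q_def by blast
  then have Qk: "Q k" unfolding k_def by (rule LeastI)
  have kmin: "k \<le> degree (lead_coeff g)" if "g \<in> I" "g \<noteq> 0" "degree g = n" for g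
    unfolding k_def by (rule Least_le) (unfold Q_def, use that in blast)
  obtain g0 where g0: "g0 \<in> I" "g0 \<noteq> 0" "degree g0 = n" "degree (lead_coeff g0) = k"
    using Qk unfolding Q_def by blast
  have np: "psi \<gamma> g0 \<noteq> 0" for \<gamma>
  proof
    assume "psi \<gamma> g0 = 0"
    then obtain g1' where e: "g0 = [:[:-\<gamma>,1:]:] * g1'" using psi_zero_dvd by blast
    have "[:[:-\<gamma>,1:]:] \<notin> I" using nc[of "[:-\<gamma>,1:]"] by auto
    moreover have "[:[:-\<gamma>,1:]:] * g1' \<in> I" using g0(1) unfolding e .
    ultimately have "g1' \<in> I" using pr by blast
    have nz: "g1' \<noteq> 0" using e g0(2) by auto
    have "degree g0 = degree [:[:-\<gamma>,1:]:] + degree g1'"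
      unfolding e by (rule degree_mult_eq) (use nz in auto)
    then have dg: "degree g1' = n" using g0(3) by simp
    have "lead_coeff g0 = lead_coeff [:[:-\<gamma>,1:]:] * lead_coeff g1'"
      unfolding e by (rule lead_coeff_mult)
    then have lc: "lead_coeff g0 = [:-\<gamma>,1:] * lead_coeff g1'" by simp
    have "degree ([:-\<gamma>,1:] * lead_coeff g1') = degree [:-\<gamma>,1:] + degree (lead_coeff g1')"
      by (rule degree_mult_eq) (use nz in auto)
    then have "degree (lead_coeff g0) = Suc (degree (lead_coeff g1'))" unfolding lc by simp
    moreover have "k \<le> degree (lead_coeff g1')" by (rule kmin) fact+
    ultimately show False using g0(4) by simp
  qed
  have dv: "g0 dvd h" if h: "h \<in> I" for h
  proof -
    obtain q r where pd: "pseudo_divmod h g0 = (q, r)" by (metis surj_pair)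
    define c where "c = coeff g0 (degree g0) ^ (Suc (degree h) - degree g0)"
    have e: "smult c h = g0 * q + r" unfolding c_def by (rule pseudo_divmod(1)[OF g0(2) pd])
    have dr: "r = 0 \<or> degree r < degree g0" by (rule pseudo_divmod(2)[OF g0(2) pd])
    have c0: "c \<noteq> 0" unfolding c_def using g0(2) by simp
    have sm: "[:c:] * h = smult c h" by simp
    have "r = [:c:] * h - g0 * q" unfolding sm e by simp
    also have "\<dots> \<in> I" by (rule ideal_diff[OF id], rule ideal_mult[OF id h], rule ideal_mult2[OF id g0(1)])
    finally have "r \<in> I" .
    have "r = 0"
    proof (rule ccontr)
      assume "r \<noteq> 0"
      then have "n \<le> degree r" using nmin \<open>r \<in> I\<close> by blast
      with dr \<open>r \<noteq> 0\<close> g0(3) show False by simp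
    qed
    then have "[:c:] * h = g0 * q" unfolding sm e by simp
    then have "g0 dvd [:c:] * h" by (rule dvdI)
    then show ?thesis using GL[OF np c0] by blast
  qed
  have "I = principal_ideal g0"
  proof
    show "I \<subseteq> principal_ideal g0" using dv in_principal by blast
    show "principal_ideal g0 \<subseteq> I" using ideal_mult2[OF id g0(1)] unfolding principal_ideal_def by blast
  qed
  then show ?thesis by blast
qed

section \<open>Nullstellensatz for maximal ideals\<close>

lemma const2_unit_in:
  fixes m :: "'a::field poly poly set"
  assumes "is_maximal_ideal m" "c \<noteq> 0" "const2 c \<in> m"
  shows False
proof -
  have "const2 (inverse c) * const2 c \<in> m" by (rule ideal_mult[OF maximal_ideal[OF assms(1)] assms(3)])
  also have "const2 (inverse c) * const2 c = 1" using assms(2) by (simp flip: const2_mult)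
  finally show False using maximal_1[OF assms(1)] by blast
qed

lemma NS_aux:
  fixes m :: "'a::alg_closed_field poly poly set"
  assumes mx: "is_maximal_ideal m"
  shows "d \<noteq> 0 \<Longrightarrow> [:d:] \<in> m \<Longrightarrow> \<exists>\<gamma>. [:[:-\<gamma>,1:]:] \<in> m"
proof (induction "degree d" arbitrary: d rule: less_induct)
  case less
  show ?case
  proof (cases "degree d = 0")
    case True
    then obtain c where d: "d = [:c:]" by (metis degree_eq_zeroE)
    with less.prems have "c \<noteq> 0" "const2 c \<in> m" by (auto simp: const2_def)
    then show ?thesis using const2_unit_in[OF mx] by blast
  next
    case False
    then obtain \<gamma> where "poly d \<gamma> = 0" using alg_closed_imp_poly_has_root by blast
    then obtain d' where d: "d = [:-\<gamma>,1:] * d'" using poly_eq_0_iff_dvd by (metis dvdE)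
    with less.prems have d'0: "d' \<noteq> 0" by auto
    have "degree ([:-\<gamma>,1:] * d') = degree [:-\<gamma>,1:] + degree d'"
      by (rule degree_mult_eq) (use d'0 in auto)
    then have degd: "degree d = Suc (degree d')" unfolding d by simp
    have "[:d:] = [:[:-\<gamma>,1:]:] * [:d':]" by (simp add: d)
    then have "[:[:-\<gamma>,1:]:] \<in> m \<or> [:d':] \<in> m" using maximal_prime[OF mx] less.prems(2) by metis
    then show ?thesis
    proof
      assume "[:d':] \<in> m"
      then show ?thesis using less.hyps[of d'] degd d'0 by simp
    qed blast
  qed
qed

lemma zero_not_maximal:
  "\<not> is_maximal_ideal ({0} :: 'a::field poly poly set)"
proof
  assume mx: "is_maximal_ideal ({0} :: 'a poly poly set)"
  have "Xp \<in> principal_ideal (Xp :: 'a poly poly)" by (simp add: in_principal)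
  moreover have "(Xp :: 'a poly poly) \<noteq> 0" by (simp add: Xp_def)
  moreover have "(1 :: 'a poly poly) \<notin> principal_ideal Xp"
  proof
    assume "(1 :: 'a poly poly) \<in> principal_ideal Xp"
    then obtain r where "(1::'a poly poly) = Xp * r" unfolding in_principal by (blast elim: dvdE)
    then have "ev 0 0 (1::'a poly poly) = ev 0 0 Xp * ev 0 0 r" by (metis ev_mult)
    then show False by (simp add: Xp_def ev_def)
  qed
  moreover have "{0} \<subseteq> principal_ideal (Xp :: 'a poly poly)" by (simp add: in_principal)
  ultimately show False using mx principal_ideal_is_ideal[of "Xp :: 'a poly poly"]
    unfolding is_maximal_ideal_def by blast
qed

lemma NS1:
  fixes m :: "'a::{alg_closed_field,field_char_0} poly poly set"
  assumes mx: "is_maximal_ideal m"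
  shows "\<exists>\<gamma>. [:[:-\<gamma>,1:]:] \<in> m"
proof (cases "\<exists>d. d \<noteq> 0 \<and> [:d:] \<in> m")
  case True
  then show ?thesis using NS_aux[OF mx] by blast
next
  case False
  then have nc: "[:d:] \<in> m \<Longrightarrow> d = 0" for d by blast
  have im: "is_ideal m" using mx maximal_ideal by blast
  obtain g0 where m: "m = principal_ideal g0"
    using KL[OF im maximal_prime[OF mx] nc] by blast
  have g0m: "g0 \<in> m" unfolding m by (simp add: in_principal)
  have "m \<noteq> {0}" using zero_not_maximal mx by blast
  then have g00: "g0 \<noteq> 0" using m principal_0 by metis
  then have "lead_coeff g0 \<noteq> 0" by simp
  then have "finite {x. poly (lead_coeff g0) x = 0}" by (rule poly_roots_finite)
  then obtain \<gamma> where \<gamma>: "poly (lead_coeff g0) \<gamma> \<noteq> 0"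
    using infinite_UNIV_char_0 by (metis (mono_tags, lifting) UNIV_eq_I mem_Collect_eq)
  have "[:[:-\<gamma>,1:]:] \<notin> m" using nc[of "[:-\<gamma>,1:]"] by auto
  then obtain u where "1 - u * [:[:-\<gamma>,1:]:] \<in> m" using maximal_inv[OF mx] by blast
  then obtain w where w: "1 - u * [:[:-\<gamma>,1:]:] = g0 * w" unfolding m in_principal by (elim dvdE)
  have "psi \<gamma> (1 - u * [:[:-\<gamma>,1:]:]) = 1"
    by (simp only: psi_diff psi_mult psi_const psi_1) simp
  then have "psi \<gamma> g0 * psi \<gamma> w = 1" by (simp only: w psi_mult)
  then have "is_unit (psi \<gamma> g0)" by (metis dvdI)
  moreover have "psi \<gamma> g0 \<noteq> 0" using calculation by auto
  ultimately have "degree (psi \<gamma> g0) = 0" using is_unit_iff_degree by blast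
  moreover have "coeff (psi \<gamma> g0) (degree g0) \<noteq> 0" using \<gamma> unfolding psi_def by (simp add: coeff_map_poly)
  ultimately have "degree g0 = 0" using le_degree by fastforce
  then obtain d where "g0 = [:d:]" by (metis degree_eq_zeroE)
  then show ?thesis using nc g0m g00 by auto
qed

lemma sw_ideal:
  fixes I :: "'a::comm_ring_1 poly poly set"
  assumes "is_ideal I" shows "is_ideal (sw ` I)"
  unfolding is_ideal_def sw_image_iff
proof (intro conjI ballI allI)
  show "sw 0 \<in> I" using ideal_0[OF assms] by simp
next
  fix a b assume "a \<in> sw ` I" "b \<in> sw ` I"
  then have "sw a \<in> I" "sw b \<in> I" by (simp_all add: sw_image_iff)
  then show "sw (a + b) \<in> I" using ideal_add[OF assms] by simp
next
  fix a r assume "a \<in> sw ` I"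
  then have "sw a \<in> I" by (simp add: sw_image_iff)
  then show "sw (r * a) \<in> I" using ideal_mult[OF assms] by simp
qed

lemma sw_sw_image [simp]: "sw ` sw ` A = A"
  by (auto simp: sw_image_iff)

lemma sw_maximal:
  fixes m :: "'a::comm_ring_1 poly poly set"
  assumes mx: "is_maximal_ideal m" shows "is_maximal_ideal (sw ` m)"
proof -
  have im: "is_ideal m" using mx maximal_ideal by blast
  have 1: "is_ideal (sw ` m)" by (rule sw_ideal[OF im])
  have 2: "sw ` m \<noteq> UNIV"
  proof
    assume "sw ` m = UNIV"
    then have "x \<in> m" for x using sw_image_iff[of "sw x" m] by simp
    then have "m = UNIV" by blast
    then show False using mx unfolding is_maximal_ideal_def by blast
  qed
  have 3: "J = sw ` m \<or> J = UNIV" if "is_ideal J" "sw ` m \<subseteq> J" for J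
  proof -
    have "is_ideal (sw ` J)" by (rule sw_ideal[OF that(1)])
    moreover have "m \<subseteq> sw ` J" using that(2) by (auto simp: sw_image_iff)
    ultimately have "sw ` J = m \<or> sw ` J = UNIV" using mx unfolding is_maximal_ideal_def by blast
    then show ?thesis
    proof
      assume "sw ` J = m" then show ?thesis using sw_sw_image[of J] by simp
    next
      assume "sw ` J = UNIV" then have "sw ` sw ` J = UNIV" by (auto simp: sw_image_iff)
      then show ?thesis by simp
    qed
  qed
  show ?thesis unfolding is_maximal_ideal_def using 1 2 3 by blast
qed

lemma NS:
  fixes m :: "'a::{alg_closed_field,field_char_0} poly poly set"
  assumes mx: "is_maximal_ideal m"
  shows "\<exists>\<alpha> \<beta>. m = {f. ev \<alpha> \<beta> f = 0}"
proof -
  have im: "is_ideal m" using mx maximal_ideal by blast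
  obtain \<alpha> where a: "[:[:-\<alpha>,1:]:] \<in> m" using NS1[OF mx] by blast
  obtain \<beta> where "[:[:-\<beta>,1:]:] \<in> sw ` m" using NS1[OF sw_maximal[OF mx]] by blast
  then have b: "[:[:-\<beta>:],1:] \<in> m" unfolding sw_image_iff sw_Xlin .
  have "f \<in> m \<longleftrightarrow> ev \<alpha> \<beta> f = 0" for f
  proof -
    define f2 where "f2 = synthetic_div f [:\<beta>:]"
    define q where "q = [:synthetic_div (poly f [:\<beta>:]) \<alpha>:]"
    have e: "f = [:[:-\<beta>:],1:] * f2 + [:[:-\<alpha>,1:]:] * q + const2 (ev \<alpha> \<beta> f)"
      using decomp[of f \<beta> \<alpha>] unfolding f2_def q_def .
    have r: "[:[:-\<beta>:],1:] * f2 + [:[:-\<alpha>,1:]:] * q \<in> m"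
      by (rule ideal_add[OF im], rule ideal_mult2[OF im b], rule ideal_mult2[OF im a])
    show ?thesis
    proof
      assume f: "f \<in> m"
      have "const2 (ev \<alpha> \<beta> f) = f - ([:[:-\<beta>:],1:] * f2 + [:[:-\<alpha>,1:]:] * q)"
        by (subst (2) e) simp
      also have "\<dots> \<in> m" by (rule ideal_diff[OF im f r])
      finally show "ev \<alpha> \<beta> f = 0" using const2_unit_in[OF mx] by blast
    next
      assume "ev \<alpha> \<beta> f = 0"
      then have "f = [:[:-\<beta>:],1:] * f2 + [:[:-\<alpha>,1:]:] * q" using e by simp
      then show "f \<in> m" using r by simp
    qed
  qed
  then show ?thesis by blast
qed

section \<open>The Taylor homomorphism along D\<close>

definition phi :: "('a::field_char_0 poly poly \<Rightarrow> 'a poly poly) \<Rightarrow> 'a \<Rightarrow> 'a \<Rightarrow> 'a poly poly \<Rightarrow> 'a fps" where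
  "phi D a b f = Abs_fps (\<lambda>k. ev a b ((D ^^ k) f) / fact k)"

lemma phi_nth: "fps_nth (phi D a b f) (k) = ev a b ((D ^^ k) f) / fact k"
  by (simp add: phi_def)

lemma Dk_add: "is_derivation D \<Longrightarrow> (D ^^ k) (f + g) = (D ^^ k) f + (D ^^ k) g"
  by (induction k) (simp_all add: der_add)

lemma phi_add: "is_derivation D \<Longrightarrow> phi D a b (f + g) = phi D a b f + phi D a b g"
  by (rule fps_ext) (simp add: phi_nth Dk_add add_divide_distrib)

lemma phi_0: "is_derivation D \<Longrightarrow> phi D a b 0 = 0"
  using phi_add[of D a b 0 0] by simp

lemma cancel_aux: "(c::'a::field) \<noteq> 0 \<Longrightarrow> c * (x / (c * y)) = x / y"
  by (cases "y = 0") (simp_all add: field_simps)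

lemma phi_deriv: "fps_deriv (phi D a b f) = phi D a b (D f)"
proof (rule fps_ext)
  fix k
  have "(D ^^ Suc k) f = (D ^^ k) (D f)" by (simp only: funpow_Suc_right o_apply)
  then show "fps_nth (fps_deriv (phi D a b f)) k = fps_nth (phi D a b (D f)) k"
  proof -
    have nz: "(fact k :: 'a) \<noteq> 0" by (rule fact_nonzero)
    have nz2: "(of_nat (k + 1) :: 'a) \<noteq> 0" by (simp only: of_nat_eq_0_iff)
    have fs: "(fact (Suc k) :: 'a) = of_nat (k + 1) * fact k" by (simp only: fact_Suc Suc_eq_plus1[symmetric])
    have "fps_nth (fps_deriv (phi D a b f)) k = of_nat (k + 1) * fps_nth (phi D a b f) (k + 1)"
      by (rule fps_deriv_nth)
    also have "\<dots> = of_nat (k + 1) * (ev a b ((D ^^ Suc k) f) / fact (Suc k))"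
      by (simp only: phi_nth Suc_eq_plus1)
    also have "\<dots> = ev a b ((D ^^ Suc k) f) / fact k"
      unfolding fs using nz2 by (rule cancel_aux)
    also have "\<dots> = fps_nth (phi D a b (D f)) k"
      by (simp only: phi_nth \<open>(D ^^ Suc k) f = (D ^^ k) (D f)\<close>)
    finally show ?thesis .
  qed
qed

lemma fps_Suc_deriv:
  fixes A :: "'a::field_char_0 fps"
  shows "fps_nth (A) (Suc k) = fps_nth (fps_deriv A) (k) / of_nat (Suc k)"
  by (simp add: fps_deriv_nth del: of_nat_Suc)

lemma phi_mult:
  assumes D: "is_derivation D"
  shows "phi D a b (f * g) = phi D a b f * phi D a b g"
proof (rule fps_ext)
  fix k
  show "fps_nth (phi D a b (f * g)) k = fps_nth (phi D a b f * phi D a b g) k"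
  proof (induction k arbitrary: f g)
    case 0
    then show ?case by (simp add: phi_nth)
  next
    case (Suc k)
    have "fps_nth (phi D a b (f * g)) (Suc k) = fps_nth (phi D a b (D (f * g))) k / of_nat (Suc k)"
      by (simp only: fps_Suc_deriv phi_deriv)
    also have "fps_nth (phi D a b (D (f * g))) k = fps_nth (phi D a b (g * D f)) k + fps_nth (phi D a b (f * D g)) k"
      by (simp add: der_mult[OF D] phi_add[OF D])
    also have "\<dots> = fps_nth ((phi D a b g * phi D a b (D f))) (k) + fps_nth ((phi D a b f * phi D a b (D g))) (k)"
      by (simp only: Suc.IH)
    also have "\<dots> = fps_nth (fps_deriv (phi D a b f * phi D a b g)) k"
      by (simp add: phi_deriv fps_deriv_mult ac_simps)
    finally show ?case by (simp only: fps_Suc_deriv)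
  qed
qed

definition JJ :: "('a::field_char_0 poly poly \<Rightarrow> 'a poly poly) \<Rightarrow> 'a \<Rightarrow> 'a \<Rightarrow> 'a poly poly set" where
  "JJ D a b = {f. phi D a b f = 0}"

lemma JJ_ideal: "is_derivation D \<Longrightarrow> is_ideal (JJ D a b)"
  unfolding is_ideal_def JJ_def by (simp add: phi_add phi_0 phi_mult)

lemma JJ_prime: "is_derivation D \<Longrightarrow> x * y \<in> JJ D a b \<Longrightarrow> x \<in> JJ D a b \<or> y \<in> JJ D a b"
  unfolding JJ_def by (simp add: phi_mult)

lemma JJ_ev: "f \<in> JJ D a b \<Longrightarrow> ev a b f = 0"
  unfolding JJ_def using phi_nth[of D a b f 0] by simp

lemma JJ_D: "f \<in> JJ D a b \<Longrightarrow> D f \<in> JJ D a b"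
  unfolding JJ_def using phi_deriv[of D a b f] by simp

lemma phi_lin_nonzero:
  assumes D: "is_derivation D" and "ev a b (D L) \<noteq> 0"
  shows "phi D a b L \<noteq> 0"
proof
  assume "phi D a b L = 0"
  then have "fps_nth (phi D a b L) (1) = 0" by simp
  then show False using assms(2) by (simp add: phi_nth)
qed

lemma Phi_x:
  fixes D :: "'a::{alg_closed_field,field_char_0} poly poly \<Rightarrow> 'a poly poly"
  assumes D: "is_derivation D" and A: "ev a b (D Xp) \<noteq> 0"
  shows "d \<noteq> 0 \<Longrightarrow> phi D a b [:d:] \<noteq> 0"
proof (induction "degree d" arbitrary: d rule: less_induct)
  case less
  show ?case
  proof (cases "degree d = 0")
    case True
    then obtain c where d: "d = [:c:]" by (metis degree_eq_zeroE)
    with less.prems have "c \<noteq> 0" by simp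
    then have "fps_nth (phi D a b [:d:]) (0) \<noteq> 0" by (simp add: phi_nth d)
    then show ?thesis by auto
  next
    case False
    then obtain \<gamma> where "poly d \<gamma> = 0" using alg_closed_imp_poly_has_root by blast
    then obtain d' where d: "d = [:-\<gamma>,1:] * d'" using poly_eq_0_iff_dvd by (metis dvdE)
    with less.prems have d'0: "d' \<noteq> 0" by auto
    have "degree ([:-\<gamma>,1:] * d') = degree [:-\<gamma>,1:] + degree d'"
      by (rule degree_mult_eq) (use d'0 in auto)
    then have degd: "degree d = Suc (degree d')" unfolding d by simp
    have e: "[:d:] = [:[:-\<gamma>,1:]:] * [:d':]" by (simp add: d)
    have "D [:[:-\<gamma>,1:]:] = D Xp" unfolding Xlin_eq by (simp add: der_diff[OF D] der_const2[OF D])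
    then have "phi D a b [:[:-\<gamma>,1:]:] \<noteq> 0" using phi_lin_nonzero[OF D] A by simp
    moreover have "phi D a b [:d':] \<noteq> 0" using less.hyps[of d'] degd d'0 by simp
    ultimately show ?thesis unfolding e phi_mult[OF D] by simp
  qed
qed

lemma Phi_y:
  fixes D :: "'a::{alg_closed_field,field_char_0} poly poly \<Rightarrow> 'a poly poly"
  assumes D: "is_derivation D" and B: "ev a b (D Yp) \<noteq> 0"
  shows "d \<noteq> 0 \<Longrightarrow> phi D a b (sw [:d:]) \<noteq> 0"
proof (induction "degree d" arbitrary: d rule: less_induct)
  case less
  show ?case
  proof (cases "degree d = 0")
    case True
    then obtain c where d: "d = [:c:]" by (metis degree_eq_zeroE)
    with less.prems have "c \<noteq> 0" by simp
    have "sw [:d:] = const2 c" using sw_const2[of c] by (simp add: d const2_def)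
    then have "fps_nth (phi D a b (sw [:d:])) 0 \<noteq> 0" using \<open>c \<noteq> 0\<close> by (simp add: phi_nth)
    then show ?thesis by auto
  next
    case False
    then obtain \<gamma> where "poly d \<gamma> = 0" using alg_closed_imp_poly_has_root by blast
    then obtain d' where d: "d = [:-\<gamma>,1:] * d'" using poly_eq_0_iff_dvd by (metis dvdE)
    with less.prems have d'0: "d' \<noteq> 0" by auto
    have "degree ([:-\<gamma>,1:] * d') = degree [:-\<gamma>,1:] + degree d'"
      by (rule degree_mult_eq) (use d'0 in auto)
    then have degd: "degree d = Suc (degree d')" unfolding d by simp
    have e: "sw [:d:] = [:[:-\<gamma>:],1:] * sw [:d':]"
    proof -
      have "[:d:] = [:[:-\<gamma>,1:]:] * [:d':]" by (simp add: d)
      then show ?thesis by (simp only: sw_mult sw_Xlin)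
    qed
    have "D [:[:-\<gamma>:],1:] = D Yp" unfolding Ylin_eq by (simp add: der_diff[OF D] der_const2[OF D])
    then have "phi D a b [:[:-\<gamma>:],1:] \<noteq> 0" using phi_lin_nonzero[OF D] B by simp
    moreover have "phi D a b (sw [:d':]) \<noteq> 0" using less.hyps[of d'] degd d'0 by simp
    ultimately show ?thesis unfolding e phi_mult[OF D] by simp
  qed
qed

lemma phi_diff: "is_derivation D \<Longrightarrow> phi D a b (f - g) = phi D a b f - phi D a b g"
  using phi_add[of D a b "f - g" g] by (simp add: algebra_simps)

lemma aut_add: "is_K_alg_aut r \<Longrightarrow> r (f + g) = r f + r g"
  unfolding is_K_alg_aut_def by blast
lemma aut_const2: "is_K_alg_aut r \<Longrightarrow> r (const2 c) = const2 c"
  unfolding is_K_alg_aut_def by blast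
lemma aut_bij: "is_K_alg_aut r \<Longrightarrow> bij r"
  unfolding is_K_alg_aut_def by blast
lemma aut_diff: "is_K_alg_aut r \<Longrightarrow> r (f - g) = r f - r g"
  using aut_add[of r "f - g" g] by (simp add: algebra_simps)

lemma Dk_comm:
  assumes "r \<circ> D = D \<circ> r"
  shows "(D ^^ k) (r f) = r ((D ^^ k) f)"
proof (induction k)
  case 0 then show ?case by simp
next
  case (Suc k)
  have "D (r ((D ^^ k) f)) = r (D ((D ^^ k) f))" using assms by (metis comp_apply)
  then show ?case using Suc by simp
qed

lemma ev_rho:
  fixes r :: "'a::field poly poly \<Rightarrow> 'a poly poly"
  assumes r: "is_K_alg_aut r" and m: "m = {f. ev a b f = 0}" and rm: "r ` m = m"
  shows "ev a b (r f) = ev a b f"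
proof -
  have "f - const2 (ev a b f) \<in> m" unfolding m by simp
  then have "r (f - const2 (ev a b f)) \<in> m" using rm by blast
  then have "r f - const2 (ev a b f) \<in> m" by (simp add: aut_diff[OF r] aut_const2[OF r])
  then show ?thesis unfolding m by simp
qed

lemma phi_rho:
  fixes r :: "'a::field_char_0 poly poly \<Rightarrow> 'a poly poly"
  assumes r: "is_K_alg_aut r" and c: "r \<circ> D = D \<circ> r" and m: "m = {f. ev a b f = 0}" and rm: "r ` m = m"
  shows "phi D a b (r f) = phi D a b f"
  by (rule fps_ext) (simp add: phi_nth Dk_comm[OF c] ev_rho[OF r m rm])

lemma sw_dvd: "sw g dvd sw x \<longleftrightarrow> g dvd x"
proof
  assume "sw g dvd sw x"
  then obtain k where "sw x = sw g * k" by (elim dvdE)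
  then have "sw (sw x) = sw (sw g * k)" by simp
  then have "x = g * sw k" by simp
  then show "g dvd x" by simp
next
  assume "g dvd x"
  then obtain k where "x = g * k" by (elim dvdE)
  then show "sw g dvd sw x" by simp
qed

lemma sw_principal: "sw ` principal_ideal g = principal_ideal (sw g)"
  by (auto simp: sw_image_iff in_principal sw_dvd[of g, symmetric])

theorem main:
  fixes D \<rho> :: "'a::{alg_closed_field, field_char_0} poly poly \<Rightarrow> 'a poly poly"
    and m :: "'a poly poly set"
  assumes D: "is_derivation D"
    and "\<rho> \<in> Aut_der D"
    and mx: "is_maximal_ideal m"
    and rm: "\<rho> ` m = m"
    and nst: "\<not> (D ` m \<subseteq> m)"
  shows "\<exists>p. principal_ideal p \<subseteq> m \<and>
            D ` principal_ideal p \<subseteq> principal_ideal p \<and>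
            \<rho> ` principal_ideal p = principal_ideal p \<and>
            (\<forall>g. \<rho> g - g \<in> principal_ideal p)"
proof -
  have r: "is_K_alg_aut \<rho>" and c: "\<rho> \<circ> D = D \<circ> \<rho>" using assms(2) unfolding Aut_der_def by auto
  obtain \<alpha> \<beta> where m: "m = {f. ev \<alpha> \<beta> f = 0}" using NS[OF mx] by blast
  have AB: "ev \<alpha> \<beta> (D Xp) \<noteq> 0 \<or> ev \<alpha> \<beta> (D Yp) \<noteq> 0"
  proof (rule ccontr)
    assume "\<not> ?thesis"
    then have "ev \<alpha> \<beta> (D f) = 0" if "ev \<alpha> \<beta> f = 0" for f
      using der_ev_m[OF D _ _ that] by blast
    then have "D ` m \<subseteq> m" unfolding m by auto
    then show False using nst by blast
  qed
  define J where "J = JJ D \<alpha> \<beta>"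
  have Jid: "is_ideal J" unfolding J_def by (rule JJ_ideal[OF D])
  have Jpr: "a * b \<in> J \<Longrightarrow> a \<in> J \<or> b \<in> J" for a b unfolding J_def by (rule JJ_prime[OF D])
  have "\<exists>p. J = principal_ideal p"
  proof (cases "ev \<alpha> \<beta> (D Xp) \<noteq> 0")
    case True
    have nc: "d = 0" if "[:d:] \<in> J" for d
      using that Phi_x[OF D True, of d] unfolding J_def JJ_def by blast
    show ?thesis by (rule KL[OF Jid Jpr nc]) auto
  next
    case False
    then have B: "ev \<alpha> \<beta> (D Yp) \<noteq> 0" using AB by blast
    have nc: "d = 0" if "[:d:] \<in> sw ` J" for d
      using that Phi_y[OF D B, of d] unfolding J_def JJ_def sw_image_iff by blast
    have pr: "a * b \<in> sw ` J \<Longrightarrow> a \<in> sw ` J \<or> b \<in> sw ` J" for a b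
      unfolding sw_image_iff using Jpr by simp
    obtain g where "sw ` J = principal_ideal g" using KL[OF sw_ideal[OF Jid] pr nc] by blast
    then have "sw ` sw ` J = sw ` principal_ideal g" by simp
    then have "J = principal_ideal (sw g)" by (simp add: sw_principal)
    then show ?thesis by blast
  qed
  then obtain p where Jp: "J = principal_ideal p" by blast
  have 1: "J \<subseteq> m" unfolding m J_def using JJ_ev by blast
  have 2: "D ` J \<subseteq> J" unfolding J_def using JJ_D by blast
  have pr: "phi D \<alpha> \<beta> (\<rho> f) = phi D \<alpha> \<beta> f" for f by (rule phi_rho[OF r c m rm])
  have 3: "\<rho> ` J = J"
  proof
    show "\<rho> ` J \<subseteq> J" unfolding J_def JJ_def using pr by auto
    show "J \<subseteq> \<rho> ` J"
    proof
      fix f assume f: "f \<in> J"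
      obtain g where g: "f = \<rho> g" using aut_bij[OF r] by (metis bij_pointE)
      then have "g \<in> J" using f pr unfolding J_def JJ_def by simp
      then show "f \<in> \<rho> ` J" using g by blast
    qed
  qed
  have 4: "\<rho> g - g \<in> J" for g unfolding J_def JJ_def by (simp add: phi_diff[OF D] pr)
  show ?thesis using 1 2 3 4 unfolding Jp by blast
qed

theorem lemma2p1:
  fixes D \<rho> :: "'a::{alg_closed_field, field_char_0} poly poly \<Rightarrow> 'a poly poly"
    and m :: "'a poly poly set"
  assumes "is_derivation D"
    and "\<rho> \<in> Aut_der D"
    and "is_maximal_ideal m"
    and "\<rho> ` m = m"
    and "\<not> (D ` m \<subseteq> m)"
  shows "\<exists>p. principal_ideal p \<subseteq> m \<and>
            D ` principal_ideal p \<subseteq> principal_ideal p \<and>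
            \<rho> ` principal_ideal p = principal_ideal p \<and>
            (\<forall>g. \<rho> g - g \<in> principal_ideal p)"
  by (rule main[OF assms])

end
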